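(* Fix $\theta\in[0,1]$, $u\in[0,1)$, $m\in\mathbb N$ ($m\ge2$ if $u>0$) and $h=\tau/(m-u)$. If there exists $p\in\mathbb R$ such that $$F\big(A^{\frac p2-1}BA^{-\frac p2}\big)\subseteq\bigcap_{y\in -hF(A)}D_y,$$ then the $\theta$-method is stable. (Here $-hF(A)=\{-hz: z\in F(A)\}=[-h\lambda_{\max}(A),-h\lambda_{\min}(A)]\subset(-\infty,0)$.)
   Context: Let $N\in\mathbb N$, $\tau>0$, let $A\in M_N(\mathbb C)$ be Hermitian positive definite and $B\in M_N(\mathbb C)$ arbitrary, and consider the delay differential equation $y'(t)=-Ay(t)+By(t-\tau)$. Fix $\theta\in[0,1]$, $u\in[0,1)$ and $m\in\mathbb N$ (with $m\ge2$ if $u>0$), and set the step size $h=\tau/(m-u)$. The $\theta$-method (with linear interpolation of the delayed term) is the recursion, for $n\ge0$ and arbitrary starting values $y_{-m},\dots,y_0\in\mathbb C^N$, $$y_{n+1}=y_n+h(1-\theta)\big[-Ay_n+B((1-u)y_{n-m}+u\,y_{n-m+1})\big]+h\theta\big[-Ay_{n+1}+B((1-u)y_{n-m+1}+u\,y_{n-m+2})\big].$$ The method is called stable (for these $\theta,u,m,h$) if for every choice of starting values $y_n\to0$ as $n\to\infty$. Define $a(z)=z^{m+1}-z^m$, $b(z)=\theta(uz^2+(1-u)z)+(1-\theta)(uz+(1-u))$, $c(z)=\theta z^{m+1}+(1-\theta)z^m$. For $y<0$, $D_y$ is the set of $\mu\in\mathbb C$ such that all roots $\xi$ of $a(\xi)=y\,c(\xi)-y\mu\,b(\xi)$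 satisfy $|\xi|<1$. For $s\in\mathbb R$, $A^s$ is defined via the spectral decomposition of $A$; $F(M)=\{x^*Mx:x\in\mathbb C^N,\ x^*x=1\}$ is the field of values. *)

theory Defs
  imports "HOL-Analysis.Analysis"
begin

text \<open>Square complex matrices are represented as complex^'n^'n (N = CARD('n)).\<close>

definition adjoint_mat :: "complex^'n^'m \<Rightarrow> complex^'m^'n" where
  "adjoint_mat M = (\<chi> i j. cnj (M $ j $ i))"

definition hermitian_mat :: "complex^'n^'n \<Rightarrow> bool" where
  "hermitian_mat A \<longleftrightarrow> adjoint_mat A = A"

definition qform :: "complex^'n \<Rightarrow> complex^'n^'n \<Rightarrow> complex" where
  "qform x M = (\<Sum>i\<in>UNIV. cnj (x $ i) * (M *v x) $ i)"

definition pos_def_mat :: "complex^'n^'n \<Rightarrow> bool" where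
  "pos_def_mat A \<longleftrightarrow> hermitian_mat A \<and> (\<forall>x. x \<noteq> 0 \<longrightarrow> Re (qform x A) > 0)"

definition unitary_mat :: "complex^'n^'n \<Rightarrow> bool" where
  "unitary_mat U \<longleftrightarrow> adjoint_mat U ** U = mat 1"

definition diag_mat :: "('n \<Rightarrow> complex) \<Rightarrow> complex^'n^'n" where
  "diag_mat d = (\<chi> i j. if i = j then d i else 0)"

text \<open>Real power A^s of a Hermitian positive definite matrix, defined via a spectral
  decomposition A = U diag(lambda) U^* (U unitary, lambda > 0): A^s = U diag(lambda^s) U^*.
  (The result does not depend on the chosen decomposition.)\<close>
definition mat_rpow :: "complex^'n^'n \<Rightarrow> real \<Rightarrow> complex^'n^'n" where
  "mat_rpow A s = (SOME M. \<exists>U (d :: 'n \<Rightarrow> real).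
      unitary_mat U \<and> (\<forall>i. d i > 0) \<and>
      A = U ** diag_mat (\<lambda>i. complex_of_real (d i)) ** adjoint_mat U \<and>
      M = U ** diag_mat (\<lambda>i. complex_of_real (d i powr s)) ** adjoint_mat U)"

definition field_of_values :: "complex^'n^'n \<Rightarrow> complex set" where
  "field_of_values M = {qform x M | x. (\<Sum>i\<in>UNIV. (cmod (x $ i))\<^sup>2) = 1}"

definition a_poly :: "nat \<Rightarrow> complex \<Rightarrow> complex" where
  "a_poly m z = z ^ (m + 1) - z ^ m"

definition b_poly :: "real \<Rightarrow> real \<Rightarrow> complex \<Rightarrow> complex" where
  "b_poly \<theta> u z = of_real \<theta> * (of_real u * z\<^sup>2 + of_real (1 - u) * z)
                    + of_real (1 - \<theta>) * (of_real u * z + of_real (1 - u))"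

definition c_poly :: "real \<Rightarrow> nat \<Rightarrow> complex \<Rightarrow> complex" where
  "c_poly \<theta> m z = of_real \<theta> * z ^ (m + 1) + of_real (1 - \<theta>) * z ^ m"

definition D_set :: "real \<Rightarrow> real \<Rightarrow> nat \<Rightarrow> complex \<Rightarrow> complex set" where
  "D_set \<theta> u m y = {\<mu>. \<forall>\<xi>. a_poly m \<xi> = y * c_poly \<theta> m \<xi> - y * \<mu> * b_poly \<theta> u \<xi>
                              \<longrightarrow> cmod \<xi> < 1}"

text \<open>One step of the theta-method with linear interpolation of the delayed term.\<close>
definition theta_step :: "complex^'n^'n \<Rightarrow> complex^'n^'n \<Rightarrow> real \<Rightarrow> real \<Rightarrow> nat \<Rightarrow> real
    \<Rightarrow> (int \<Rightarrow> complex^'n) \<Rightarrow> int \<Rightarrow> bool" where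
  "theta_step A B \<theta> u m h y n \<longleftrightarrow>
     y (n + 1) = y n
       + complex_of_real (h * (1 - \<theta>)) *s
           (- (A *v y n) + B *v (complex_of_real (1 - u) *s y (n - int m)
                                 + complex_of_real u *s y (n - int m + 1)))
       + complex_of_real (h * \<theta>) *s
           (- (A *v y (n + 1)) + B *v (complex_of_real (1 - u) *s y (n - int m + 1)
                                       + complex_of_real u *s y (n - int m + 2)))"

definition theta_stable :: "complex^'n^'n \<Rightarrow> complex^'n^'n \<Rightarrow> real \<Rightarrow> real \<Rightarrow> nat \<Rightarrow> real \<Rightarrow> bool" where
  "theta_stable A B \<theta> u m h \<longleftrightarrow>
     (\<forall>y :: int \<Rightarrow> complex^'n. (\<forall>n \<ge> 0. theta_step A B \<theta> u m h y n)
        \<longrightarrow> (\<lambda>k::nat. y (int k)) \<longlonglongrightarrow> 0)"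

end

theory Submission
  imports Defs "Jordan_Normal_Form.Spectral_Radius"
begin

no_notation vec_index (infixl "$" 100)

lemma smult_pow_mat:
  assumes S: "(S :: complex mat) \<in> carrier_mat n n"
  shows "(r \<cdot>\<^sub>m S) ^\<^sub>m k = r^k \<cdot>\<^sub>m (S ^\<^sub>m k)"
proof (induction k)
  case 0
  then show ?case using S by (intro eq_matI) auto
next
  case (Suc k)
  have "(r \<cdot>\<^sub>m S) ^\<^sub>m Suc k = (r^k \<cdot>\<^sub>m (S ^\<^sub>m k)) * (r \<cdot>\<^sub>m S)" using Suc by simp
  also have "\<dots> = r^Suc k \<cdot>\<^sub>m (S ^\<^sub>m Suc k)"
    using S by (intro eq_matI) (auto simp: scalar_prod_def sum_distrib_left ac_simps)
  finally show ?case .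
qed

lemma jnf_decay:
  fixes T :: "complex mat"
  assumes T: "T \<in> carrier_mat D D"
    and ev: "\<And>\<xi> v. v \<in> carrier_vec D \<Longrightarrow> v \<noteq> 0\<^sub>v D \<Longrightarrow> T *\<^sub>v v = \<xi> \<cdot>\<^sub>v v \<Longrightarrow> cmod \<xi> < 1"
    and x: "x \<in> carrier_vec D" and i: "i < D"
  shows "(\<lambda>k. vec_index ((T ^\<^sub>m k) *\<^sub>v x) i) \<longlonglongrightarrow> 0"
proof -
  have D: "D > 0" using i by auto
  define \<rho> where "\<rho> = spectral_radius T"
  have "\<rho> \<in> norm ` spectrum T" using spectral_radius_mem_max(1)[OF T D] \<rho>_def by auto
  then obtain e where e: "e \<in> spectrum T" "\<rho> = cmod e" by auto
  then obtain v where "eigenvector T v e" unfolding spectrum_def eigenvalue_def by auto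
  hence "cmod e < 1" using T ev unfolding eigenvector_def by auto
  hence \<rho>1: "\<rho> < 1" "\<rho> \<ge> 0" using e by auto
  define r where "r = (1 + \<rho>) / 2"
  have r: "0 < r" "r < 1" "\<rho> < r" using \<rho>1 unfolding r_def by auto
  define S where "S = complex_of_real (1/r) \<cdot>\<^sub>m T"
  have S: "S \<in> carrier_mat D D" using T unfolding S_def by auto
  have TS: "T = complex_of_real r \<cdot>\<^sub>m S"
    using T r unfolding S_def by (intro eq_matI) auto
  have "spectral_radius S \<in> norm ` spectrum S" using spectral_radius_mem_max(1)[OF S D] by auto
  then obtain f where f: "f \<in> spectrum S" "spectral_radius S = cmod f" by auto
  then obtain w where w: "eigenvector S w f" unfolding spectrum_def eigenvalue_def by auto
  have "T *\<^sub>v w = complex_of_real r \<cdot>\<^sub>v (S *\<^sub>v w)"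
  proof -
    have "w \<in> carrier_vec D" using w S unfolding eigenvector_def by auto
    thus ?thesis using S unfolding TS
    by (intro eq_vecI) (auto simp: scalar_prod_def sum_distrib_left ac_simps)
  qed
  also have "\<dots> = (complex_of_real r * f) \<cdot>\<^sub>v w"
    using w unfolding eigenvector_def by (simp add: smult_smult_assoc)
  finally have "T *\<^sub>v w = (complex_of_real r * f) \<cdot>\<^sub>v w" .
  hence "eigenvector T w (complex_of_real r * f)" using w T S unfolding eigenvector_def by auto
  hence "norm (complex_of_real r * f) \<in> norm ` spectrum T" unfolding spectrum_def eigenvalue_def by auto
  from spectral_radius_mem_max(2)[OF T D this]
  have "r * cmod f \<le> \<rho>" using r unfolding \<rho>_def by (simp add: norm_mult)
  hence "cmod f < 1" using r
  proof -
    assume a: "r * cmod f \<le> \<rho>"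
    show ?thesis
    proof (rule ccontr)
      assume "\<not> cmod f < 1"
      hence "r * 1 \<le> r * cmod f" using r mult_left_mono[of 1 "cmod f" r] by linarith
      thus False using a r by linarith
    qed
  qed
  hence "spectral_radius S < 1" using f by auto
  from spectral_radius_jnf_norm_bound_less_1_upper_triangular[OF S this]
  obtain c where c: "\<And>k. norm_bound (S ^\<^sub>m k) c" by auto
  define K where "K = c * (\<Sum>j<D. cmod (vec_index x j))"
  have bound: "cmod (vec_index ((T ^\<^sub>m k) *\<^sub>v x) i) \<le> r^k * K" for k
  proof -
    have "vec_index ((T ^\<^sub>m k) *\<^sub>v x) i = complex_of_real (r^k) * (\<Sum>j<D. vec_index (row (S ^\<^sub>m k) i) j * vec_index x j)"
      unfolding TS smult_pow_mat[OF S] using S x i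
      by (auto simp: scalar_prod_def sum_distrib_left ac_simps atLeast0LessThan)
    also have "cmod \<dots> = r^k * cmod (\<Sum>j<D. vec_index (row (S ^\<^sub>m k) i) j * vec_index x j)"
    proof -
      have "cmod (complex_of_real (r^k)) = r^k"
        unfolding norm_of_real by (rule abs_of_nonneg[OF zero_le_power[OF less_imp_le[OF r(1)]]])
      thus ?thesis by (simp only: norm_mult)
    qed
    also have "\<dots> \<le> r^k * K"
    proof (rule mult_left_mono)
      have "cmod (\<Sum>j<D. vec_index (row (S ^\<^sub>m k) i) j * vec_index x j)
          \<le> (\<Sum>j<D. cmod (vec_index (row (S ^\<^sub>m k) i) j * vec_index x j))" by (rule norm_sum)
      also have "\<dots> \<le> (\<Sum>j<D. c * cmod (vec_index x j))"
      proof (rule sum_mono)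
        fix j assume j: "j \<in> {..<D}"
        have "cmod (vec_index (row (S ^\<^sub>m k) i) j) \<le> c"
          using c[of k] S i j unfolding norm_bound_def by auto
        thus "cmod (vec_index (row (S ^\<^sub>m k) i) j * vec_index x j) \<le> c * cmod (vec_index x j)"
          by (simp add: norm_mult mult_right_mono)
      qed
      finally show "cmod (\<Sum>j<D. vec_index (row (S ^\<^sub>m k) i) j * vec_index x j) \<le> K"
        unfolding K_def by (simp add: sum_distrib_left)
    qed (use r in auto)
    finally show ?thesis .
  qed
  have "(\<lambda>k. r^k) \<longlonglongrightarrow> 0" using r by (intro LIMSEQ_power_zero) auto
  hence "(\<lambda>k. r^k * K) \<longlonglongrightarrow> 0 * K" by (rule tendsto_mult) (rule tendsto_const)
  hence lim: "(\<lambda>k. r^k * K) \<longlonglongrightarrow> 0" by simp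
  show ?thesis
    by (rule Lim_null_comparison[OF _ lim]) (use bound in auto)
qed

lemma sum_blocks:
  fixes f :: "nat \<Rightarrow> 'a::comm_monoid_add"
  shows "(\<Sum>j<N*(m+1). f j) = (\<Sum>b\<le>m. \<Sum>s<N. f (b*N+s))"
proof (cases "N = 0")
  case True thus ?thesis by simp
next
  case False
  hence N: "N > 0" by auto
  have bij: "bij_betw (\<lambda>(b,s). b*N+s) ({..m}\<times>{..<N}) {..<N*(m+1)}"
  proof (rule bij_betwI[where g="\<lambda>j. (j div N, j mod N)"])
    show "(\<lambda>(b,s). b*N+s) \<in> {..m}\<times>{..<N} \<rightarrow> {..<N*(m+1)}"
    proof
      fix x assume "x \<in> {..m}\<times>{..<N}"
      then obtain b s where x: "x = (b,s)" "b \<le> m" "s < N" by auto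
      have "b*N + s < b*N + N" using x by auto
      also have "\<dots> = (b+1)*N" by simp
      also have "\<dots> \<le> (m+1)*N" using x by (intro mult_right_mono) auto
      finally show "(\<lambda>(b,s). b*N+s) x \<in> {..<N*(m+1)}" using x by (simp add: mult.commute)
    qed
    show "(\<lambda>j. (j div N, j mod N)) \<in> {..<N*(m+1)} \<rightarrow> {..m}\<times>{..<N}"
    proof
      fix j assume "j \<in> {..<N*(m+1)}"
      hence "j div N < m+1" using N by (simp add: less_mult_imp_div_less mult.commute)
      thus "(j div N, j mod N) \<in> {..m}\<times>{..<N}" using N by auto
    qed
    show "(\<lambda>j. (j div N, j mod N)) ((\<lambda>(b,s). b*N+s) x) = x" if "x \<in> {..m}\<times>{..<N}" for x
      using that N by auto
    show "(\<lambda>(b,s). b*N+s) (y div N, y mod N) = y" for y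
      by simp
  qed
  have "(\<Sum>j<N*(m+1). f j) = (\<Sum>x\<in>{..m}\<times>{..<N}. f ((\<lambda>(b,s). b*N+s) x))"
    using sum.reindex_bij_betw[OF bij, of f] by simp
  also have "\<dots> = (\<Sum>b\<le>m. \<Sum>s<N. f (b*N+s))"
    by (simp add: sum.cartesian_product split_def)
  finally show ?thesis .
qed

lemma recur_decay:
  fixes M :: "nat \<Rightarrow> complex^'n^'n" and m :: nat and y :: "int \<Rightarrow> complex^'n"
  assumes eig: "\<And>\<xi> v. v \<noteq> 0 \<Longrightarrow> \<xi>^(m+1) *s v = (\<Sum>b\<le>m. \<xi>^(m-b) *s (M b *v v)) \<Longrightarrow> cmod \<xi> < 1"
    and rec: "\<And>n. n \<ge> 0 \<Longrightarrow> y (n+1) = (\<Sum>b\<le>m. M b *v y (n - int b))"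
  shows "(\<lambda>k. y (int k)) \<longlonglongrightarrow> 0"
proof -
  define N where "N = CARD('n)"
  have N: "N > 0" unfolding N_def by auto
  define g :: "nat \<Rightarrow> 'n" where "g = from_nat_into UNIV"
  have bij: "bij_betw g {..<N} UNIV" unfolding g_def N_def
    using bij_betw_from_nat_into_finite[of "UNIV :: 'n set"] by simp
  define gi where "gi = the_inv_into {..<N} g"
  have gi: "gi s < N" "g (gi s) = s" for s
  proof -
    have inj: "inj_on g {..<N}" and im: "s \<in> g ` {..<N}" using bij unfolding bij_betw_def by auto
    show "gi s < N" using the_inv_into_into[OF inj im, of "{..<N}"] unfolding gi_def by auto
    show "g (gi s) = s" using f_the_inv_into_f[OF inj im] unfolding gi_def by auto
  qed
  have gig: "gi (g r) = r" if "r < N" for r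
    using bij that unfolding gi_def bij_betw_def by (auto intro: the_inv_into_f_f)
  have sumg: "(\<Sum>s\<in>UNIV. F s) = (\<Sum>r<N. F (g r))" for F :: "'n \<Rightarrow> complex"
    using sum.reindex_bij_betw[OF bij, of F] by simp
  define D where "D = N*(m+1)"
  have divD: "i div N \<le> m" if "i < D" for i
  proof -
    have "i div N < m+1" using that N unfolding D_def by (simp add: less_mult_imp_div_less mult.commute)
    thus ?thesis by simp
  qed
  have blk: "(a*N + r) div N = a" "(a*N + r) mod N = r" "a*N + r < D" if "a \<le> m" "r < N" for a r
  proof -
    show "(a*N + r) div N = a" "(a*N + r) mod N = r" using that N by auto
    have "a*N + r < a*N + N" using that by auto
    also have "\<dots> = (a+1)*N" by simp
    also have "\<dots> \<le> (m+1)*N" using that by (intro mult_right_mono) auto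
    finally show "a*N + r < D" unfolding D_def by (simp add: mult.commute)
  qed
  define T :: "complex mat" where "T = mat D D (\<lambda>(i,j). if i div N = 0
      then M (j div N) $ g (i mod N) $ g (j mod N)
      else if j div N + 1 = i div N \<and> j mod N = i mod N then 1 else 0)"
  have T: "T \<in> carrier_mat D D" unfolding T_def by auto
  have Tv: "vec_index (T *\<^sub>v V) i = (\<Sum>b\<le>m. \<Sum>s<N. vec_index V (b*N+s) *
      (if i div N = 0 then M b $ g (i mod N) $ g s
       else if b + 1 = i div N \<and> s = i mod N then 1 else 0))"
    if V: "V \<in> carrier_vec D" and i: "i < D" for V i
  proof -
    have "vec_index (T *\<^sub>v V) i = (\<Sum>j<D. vec_index V j * (T $$ (i,j)))"
      using T V i by (auto simp: scalar_prod_def atLeast0LessThan mult.commute)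
    also have "\<dots> = (\<Sum>b\<le>m. \<Sum>s<N. vec_index V (b*N+s) * (T $$ (i,b*N+s)))"
      unfolding D_def by (rule sum_blocks)
    also have "\<dots> = (\<Sum>b\<le>m. \<Sum>s<N. vec_index V (b*N+s) *
      (if i div N = 0 then M b $ g (i mod N) $ g s
       else if b + 1 = i div N \<and> s = i mod N then 1 else 0))"
      using i blk by (intro sum.cong refl) (auto simp: T_def)
    finally show ?thesis .
  qed
  define X where "X k = vec D (\<lambda>i. y (int k - int (i div N)) $ g (i mod N))" for k
  have X: "X k \<in> carrier_vec D" for k unfolding X_def by auto
  have step: "X (Suc k) = T *\<^sub>v X k" for k
  proof (rule eq_vecI)
    show "dim_vec (X (Suc k)) = dim_vec (T *\<^sub>v X k)" using T X by auto
    fix i assume "i < dim_vec (T *\<^sub>v X k)"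
    hence i: "i < D" using T by auto
    define a where "a = i div N"
    define r where "r = i mod N"
    have a: "a \<le> m" unfolding a_def using divD[OF i] .
    have r: "r < N" unfolding r_def using N by auto
    have Xi: "vec_index (X k) (b*N+s) = y (int k - int b) $ g s" if "b \<le> m" "s < N" for b s
      unfolding X_def using blk[OF that] by auto
    have rhs: "vec_index (T *\<^sub>v X k) i = (\<Sum>b\<le>m. \<Sum>s<N. y (int k - int b) $ g s *
      (if a = 0 then M b $ g r $ g s else if b + 1 = a \<and> s = r then 1 else 0))"
      unfolding Tv[OF X i] a_def[symmetric] r_def[symmetric]
      by (intro sum.cong refl) (auto simp: Xi)
    show "vec_index (X (Suc k)) i = vec_index (T *\<^sub>v X k) i"
    proof (cases "a = 0")
      case True
      have "vec_index (X (Suc k)) i = y (int k + 1) $ g r"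
        using i True unfolding X_def a_def r_def by (auto simp: add.commute)
      also have "\<dots> = (\<Sum>b\<le>m. M b *v y (int k - int b)) $ g r" using rec[of "int k"] by simp
      also have "\<dots> = (\<Sum>b\<le>m. \<Sum>s<N. M b $ g r $ g s * y (int k - int b) $ g s)"
        by (simp add: sum_component matrix_vector_mult_def sumg)
      also have "\<dots> = vec_index (T *\<^sub>v X k) i" unfolding rhs using True by (simp add: mult.commute)
      finally show ?thesis .
    next
      case False
      have "vec_index (T *\<^sub>v X k) i = (\<Sum>b\<le>m. \<Sum>s<N. if b = a - 1 \<and> s = r then y (int k - int b) $ g s else 0)"
        unfolding rhs using False by (intro sum.cong refl) auto
      also have "\<dots> = (\<Sum>b\<le>m. if b = a - 1 then y (int k - int b) $ g r else 0)"
      proof (intro sum.cong refl)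
        fix b
        show "(\<Sum>s<N. if b = a - 1 \<and> s = r then y (int k - int b) $ g s else 0) =
          (if b = a - 1 then y (int k - int b) $ g r else 0)"
          using r by (cases "b = a - 1") (simp_all add: sum.delta)
      qed
      also have "\<dots> = y (int k - int (a - 1)) $ g r"
        using a by (simp add: sum.delta)
      also have "\<dots> = vec_index (X (Suc k)) i"
      proof -
        have e: "int k - int (a - 1) = int (Suc k) - int (i div N)" using False unfolding a_def by auto
        show ?thesis using i unfolding X_def e r_def by simp
      qed
      finally show ?thesis by simp
    qed
  qed
  have pow: "X (k + j) = (T ^\<^sub>m k) *\<^sub>v X j" for k j
  proof (induction k arbitrary: j)
    case 0 thus ?case using X[of j] T by simp
  next
    case (Suc k)
    have "X (Suc k + j) = X (k + Suc j)" by simp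
    also have "\<dots> = (T ^\<^sub>m k) *\<^sub>v X (Suc j)" by (rule Suc.IH)
    also have "\<dots> = (T ^\<^sub>m k) *\<^sub>v (T *\<^sub>v X j)" by (simp only: step)
    also have "\<dots> = (T ^\<^sub>m Suc k) *\<^sub>v X j" using assoc_mult_mat_vec[of "T ^\<^sub>m k" D D T D "X j"] T X[of j] by simp
    finally show ?case .
  qed
  have evT: "cmod \<xi> < 1" if v: "v \<in> carrier_vec D" "v \<noteq> 0\<^sub>v D" "T *\<^sub>v v = \<xi> \<cdot>\<^sub>v v" for \<xi> v
  proof -
    define w where "w a = (\<chi> s. vec_index v (a*N + gi s))" for a
    have row: "vec_index (T *\<^sub>v v) i = \<xi> * vec_index v i" if "i < D" for i
      using that v(1) unfolding v(3) by simp
    have shift: "w (a - 1) = \<xi> *s w a" if a: "1 \<le> a" "a \<le> m" for a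
    proof (rule Finite_Cartesian_Product.vec_eq_iff[THEN iffD2], rule allI)
      fix s
      define i where "i = a*N + gi s"
      have i: "i < D" "i div N = a" "i mod N = gi s" using blk[OF a(2) gi(1)] unfolding i_def by auto
      have "\<xi> * vec_index v i = vec_index (T *\<^sub>v v) i" using row[OF i(1)] by simp
      also have "\<dots> = (\<Sum>b\<le>m. \<Sum>t<N. vec_index v (b*N+t) *
        (if b + 1 = a \<and> t = gi s then 1 else 0))"
        unfolding Tv[OF v(1) i(1)] i(2,3) using a by simp
      also have "\<dots> = (\<Sum>b\<le>m. if b = a - 1 then vec_index v (b*N + gi s) else 0)"
      proof (intro sum.cong refl)
        fix b
        show "(\<Sum>t<N. vec_index v (b*N+t) * (if b + 1 = a \<and> t = gi s then 1 else 0)) =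
          (if b = a - 1 then vec_index v (b*N + gi s) else 0)"
        proof -
          have mi: "\<And>(x::complex) P. x * (if P then 1 else 0) = (if P then x else 0)" by simp
          show ?thesis
          proof (cases "b = a - 1")
            case True
            hence "b + 1 = a" using a by simp
            thus ?thesis unfolding mi using gi(1)[of s] True by (simp add: sum.delta)
          next
            case False
            hence "b + 1 \<noteq> a" using a by simp
            thus ?thesis unfolding mi using False by simp
          qed
        qed
      qed
      also have "\<dots> = vec_index v ((a-1)*N + gi s)" using a by (simp add: sum.delta)
      finally show "w (a - 1) $ s = (\<xi> *s w a) $ s" unfolding w_def i_def by simp
    qed
    have top: "(\<Sum>b\<le>m. M b *v w b) = \<xi> *s w 0"
    proof (rule Finite_Cartesian_Product.vec_eq_iff[THEN iffD2], rule allI)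
      fix s
      define i where "i = gi s"
      have i: "i < D" "i div N = 0" "i mod N = gi s" using blk[OF _ gi(1), of 0 s] unfolding i_def by auto
      have "\<xi> * vec_index v i = vec_index (T *\<^sub>v v) i" using row[OF i(1)] by simp
      also have "\<dots> = (\<Sum>b\<le>m. \<Sum>t<N. vec_index v (b*N+t) * M b $ s $ g t)"
        unfolding Tv[OF v(1) i(1)] i(2,3) gi(2) by simp
      also have "\<dots> = (\<Sum>b\<le>m. M b *v w b) $ s"
        by (simp add: sum_component matrix_vector_mult_def sumg w_def gig mult.commute)
      finally show "(\<Sum>b\<le>m. M b *v w b) $ s = (\<xi> *s w 0) $ s" unfolding w_def i_def by simp
    qed
    have pw: "w (m - j) = \<xi>^j *s w m" if "j \<le> m" for j
      using that
    proof (induction j)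
      case 0 thus ?case by simp
    next
      case (Suc j)
      have "w (m - Suc j) = w (m - j - 1)" by simp
      also have "\<dots> = \<xi> *s w (m - j)" using Suc.prems by (intro shift) auto
      also have "\<dots> = \<xi>^Suc j *s w m" using Suc by (simp add: vector_smult_assoc)
      finally show ?case .
    qed
    have pw': "w b = \<xi>^(m-b) *s w m" if "b \<le> m" for b
      using pw[of "m - b"] that by simp
    have wm: "w m \<noteq> 0"
    proof
      assume w0: "w m = 0"
      have "v = 0\<^sub>v D"
      proof (rule eq_vecI)
        show "dim_vec v = dim_vec (0\<^sub>v D)" using v(1) by simp
        fix i assume "i < dim_vec (0\<^sub>v D)"
        hence i: "i < D" by simp
        have ii: "i = (i div N)*N + gi (g (i mod N))" using N gig[of "i mod N"] by simp
        have "vec_index v i = w (i div N) $ g (i mod N)"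
          unfolding w_def by (subst ii) simp
        also have "\<dots> = 0" using pw'[OF divD[OF i]] w0 by simp
        finally show "vec_index v i = vec_index (0\<^sub>v D) i" using i by simp
      qed
      thus False using v(2) by simp
    qed
    show ?thesis
    proof (rule eig[OF wm])
      have "\<xi>^(m+1) *s w m = \<xi> *s w 0" using pw'[of 0] by (simp add: vector_smult_assoc)
      also have "\<dots> = (\<Sum>b\<le>m. M b *v w b)" using top by simp
      also have "\<dots> = (\<Sum>b\<le>m. \<xi>^(m-b) *s (M b *v w m))"
      proof (intro sum.cong refl)
        fix b assume "b \<in> {..m}"
        hence "M b *v w b = M b *v (\<xi>^(m-b) *s w m)" using pw'[of b] by (intro arg_cong[where f="(*v) (M b)"]) auto
        thus "M b *v w b = \<xi>^(m-b) *s (M b *v w m)" by (simp add: vector_scalar_commute)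
      qed
      finally show "\<xi>^(m+1) *s w m = (\<Sum>b\<le>m. \<xi>^(m-b) *s (M b *v w m))" .
    qed
  qed
  have comp: "(\<lambda>k. y (int k) $ s) \<longlonglongrightarrow> 0" for s
  proof -
    have i: "gi s < D" using gi(1)[of s] blk[of 0 "gi s"] by auto
    have "(\<lambda>k. vec_index ((T ^\<^sub>m k) *\<^sub>v X 0) (gi s)) \<longlonglongrightarrow> 0"
      by (rule jnf_decay[OF T evT X i])
    moreover have "vec_index ((T ^\<^sub>m k) *\<^sub>v X 0) (gi s) = y (int k) $ s" for k
    proof -
      have "(T ^\<^sub>m k) *\<^sub>v X 0 = X k" using pow[of k 0] by simp
      moreover have "vec_index (X k) (gi s) = y (int k) $ s" using i gi[of s] unfolding X_def by simp
      ultimately show ?thesis by simp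
    qed
    ultimately show ?thesis by simp
  qed
  show ?thesis by (rule vec_tendstoI) (use comp in simp)
qed

definition ip :: "complex^'n \<Rightarrow> complex^'n \<Rightarrow> complex" where
  "ip x y = (\<Sum>i\<in>UNIV. cnj (x $ i) * y $ i)"

lemma qform_ip: "qform x M = ip x (M *v x)"
  unfolding qform_def ip_def by simp

lemma ip_add_right: "ip x (y + z) = ip x y + ip x z"
  unfolding ip_def by (simp add: distrib_left sum.distrib)
lemma ip_add_left: "ip (x + y) z = ip x z + ip y z"
  unfolding ip_def by (simp add: distrib_right sum.distrib)
lemma ip_diff_right: "ip x (y - z) = ip x y - ip x z"
  unfolding ip_def by (simp add: right_diff_distrib sum_subtractf)
lemma ip_smult_right: "ip x (c *s y) = c * ip x y"
  unfolding ip_def by (simp add: sum_distrib_left ac_simps)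
lemma ip_smult_left: "ip (c *s x) y = cnj c * ip x y"
  unfolding ip_def by (simp add: sum_distrib_left ac_simps)
lemma ip_zero_right[simp]: "ip x 0 = 0" unfolding ip_def by simp
lemma ip_zero_left[simp]: "ip 0 x = 0" unfolding ip_def by simp
lemma ip_cnj: "cnj (ip x y) = ip y x"
  unfolding ip_def by (simp add: cnj_sum mult.commute)

lemma ip_self: "ip x x = complex_of_real ((norm x)^2)"
proof -
  have "(norm x)^2 = (\<Sum>i\<in>UNIV. (cmod (x $ i))^2)"
    unfolding norm_vec_def L2_set_def by (simp add: sum_nonneg)
  hence "complex_of_real ((norm x)^2) = (\<Sum>i\<in>UNIV. complex_of_real ((cmod (x $ i))^2))" by simp
  also have "\<dots> = ip x x" unfolding ip_def complex_norm_square by (simp add: mult.commute)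
  finally show ?thesis by simp
qed

lemma ip_adj: "ip x (M *v y) = ip (adjoint_mat M *v x) y"
proof -
  have "ip x (M *v y) = (\<Sum>i\<in>UNIV. \<Sum>j\<in>UNIV. cnj (x $ i) * M $ i $ j * y $ j)"
    unfolding ip_def matrix_vector_mult_def by (simp add: sum_distrib_left mult.assoc)
  also have "\<dots> = (\<Sum>j\<in>UNIV. \<Sum>i\<in>UNIV. cnj (x $ i) * M $ i $ j * y $ j)" by (rule sum.swap)
  also have "\<dots> = ip (adjoint_mat M *v x) y"
    unfolding ip_def matrix_vector_mult_def adjoint_mat_def
    by (simp add: cnj_sum sum_distrib_right sum_distrib_left ac_simps)
  finally show ?thesis .
qed

lemma ip_herm: "hermitian_mat A \<Longrightarrow> ip x (A *v y) = ip (A *v x) y"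
  using ip_adj[of x A y] unfolding hermitian_mat_def by simp

lemma ip_herm_real: "hermitian_mat A \<Longrightarrow> ip x (A *v x) = complex_of_real (Re (ip x (A *v x)))"
proof -
  assume h: "hermitian_mat A"
  have "cnj (ip x (A *v x)) = ip x (A *v x)" using ip_cnj[of x "A *v x"] ip_herm[OF h, of x x] by simp
  hence "Im (ip x (A *v x)) = 0" by (metis cnj.simps(2) neg_equal_zero)
  thus ?thesis by (simp add: complex_eq_iff)
qed

lemma norm_eq_ip: "ip x x = 1 \<longleftrightarrow> norm x = 1"
proof -
  have "ip x x = 1 \<longleftrightarrow> (norm x)^2 = 1" unfolding ip_self by (simp only: of_real_eq_1_iff)
  also have "\<dots> \<longleftrightarrow> norm x = 1" using power2_eq_iff_nonneg[of "norm x" 1] by simp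
  finally show ?thesis .
qed

lemma ip_eq_zero_iff: "ip x x = 0 \<longleftrightarrow> x = 0"
  unfolding ip_self by auto

lemma continuous_ip_right: "continuous_on S (\<lambda>x. ip a x)"
  unfolding ip_def
  by (intro continuous_intros continuous_on_component continuous_on_id)

lemma continuous_rayleigh: "continuous_on S (\<lambda>x. Re (ip x (A *v x)))"
  unfolding ip_def matrix_vector_mult_def
  by (simp, intro continuous_intros continuous_on_component continuous_on_id)

lemma ip_real_sq: "Re (ip x x) = (norm x)^2" unfolding ip_self by simp

lemma rayleigh_max:
  fixes A :: "complex^'n^'n"
  assumes h: "hermitian_mat A"
    and W_add: "\<And>x y. x\<in>W \<Longrightarrow> y\<in>W \<Longrightarrow> x + y \<in> W"
    and W_smult: "\<And>c x. x\<in>W \<Longrightarrow> c *s x \<in> W"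
    and W_diff: "\<And>x y. x\<in>W \<Longrightarrow> y\<in>W \<Longrightarrow> x - y \<in> W"
    and W_A: "\<And>x. x\<in>W \<Longrightarrow> A *v x \<in> W"
    and z: "z \<in> W" "norm z = 1"
    and max: "\<And>x. x \<in> W \<Longrightarrow> norm x = 1 \<Longrightarrow> Re (ip x (A *v x)) \<le> Re (ip z (A *v z))"
  shows "A *v z = complex_of_real (Re (ip z (A *v z))) *s z"
proof -
  define lm where "lm = Re (ip z (A *v z))"
  define lam where "lam = complex_of_real lm"
  have zAz: "ip z (A *v z) = lam" unfolding lam_def lm_def by (rule ip_herm_real[OF h])
  have zz: "ip z z = 1" using z(2) norm_eq_ip by auto
  define y where "y = A *v z - lam *s z"
  have yW: "y \<in> W" unfolding y_def using z W_A W_smult W_diff by auto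
  have zy: "ip z y = 0" unfolding y_def ip_diff_right ip_smult_right zAz zz by simp
  have yz: "ip y z = 0" using zy ip_cnj[of z y] by simp
  have Az: "A *v z = y + lam *s z" unfolding y_def by simp
  have yAz: "ip y (A *v z) = ip y y" unfolding Az ip_add_right ip_smult_right yz by simp
  have zAy: "ip z (A *v y) = ip y y"
  proof -
    have "ip z (A *v y) = ip (A *v z) y" by (rule ip_herm[OF h])
    also have "\<dots> = cnj (ip y (A *v z))" by (simp add: ip_cnj)
    also have "\<dots> = ip y y" unfolding yAz by (simp add: ip_cnj)
    finally show ?thesis .
  qed
  define ny where "ny = (norm y)^2"
  have yy: "ip y y = complex_of_real ny" unfolding ny_def by (rule ip_self)
  define q where "q = Re (ip y (A *v y))"
  have ineq: "2 * t * ny + t^2 * q \<le> lm * t^2 * ny" if t: "t > 0" for t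
  proof -
    define c where "c = complex_of_real t"
    define w where "w = z + c *s y"
    have wW: "w \<in> W" unfolding w_def using z yW W_add W_smult by auto
    have ww: "ip w w = complex_of_real (1 + t^2 * ny)"
      unfolding w_def ip_add_left ip_add_right ip_smult_left ip_smult_right zz zy yz yy c_def
      by (simp add: power2_eq_square)
    have wAw: "Re (ip w (A *v w)) = lm + 2 * t * ny + t^2 * q"
    proof -
      have "ip w (A *v w) = lam + c * ip y y + cnj c * ip y y + cnj c * c * ip y (A *v y)"
        unfolding w_def matrix_vector_right_distrib vector_scalar_commute
          ip_add_left ip_add_right ip_smult_left ip_smult_right zAz zAy yAz by (simp add: algebra_simps)
      thus ?thesis unfolding c_def yy lam_def q_def by (simp add: power2_eq_square)
    qed
    have nw: "(norm w)^2 = 1 + t^2 * ny" by (metis ww ip_self of_real_eq_iff)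
    have npos: "norm w > 0"
    proof -
      have "(norm w)^2 > 0" unfolding nw ny_def by (simp add: add_pos_nonneg)
      thus ?thesis by (simp add: zero_less_norm_iff)
    qed
    define w' where "w' = complex_of_real (1 / norm w) *s w"
    have w'W: "w' \<in> W" unfolding w'_def using wW W_smult by auto
    have "ip w' w' = complex_of_real ((1 / norm w)^2 * (norm w)^2)"
      unfolding w'_def ip_smult_left ip_smult_right by (simp add: ip_self power2_eq_square)
    hence "ip w' w' = 1" using npos by (simp add: field_simps)
    hence nw': "norm w' = 1" using norm_eq_ip by auto
    have e: "Re (ip w' (A *v w')) = (1 / norm w)^2 * Re (ip w (A *v w))"
      unfolding w'_def vector_scalar_commute ip_smult_left ip_smult_right
      by (simp add: power2_eq_square)
    have "(1 / norm w)^2 * Re (ip w (A *v w)) \<le> lm" using max[OF w'W nw'] e unfolding lm_def by simp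
    hence "Re (ip w (A *v w)) \<le> lm * (norm w)^2" using npos
      by (simp add: field_simps)
    thus ?thesis unfolding wAw nw by (simp add: algebra_simps)
  qed
  have "ny = 0"
  proof (rule ccontr)
    assume "ny \<noteq> 0"
    hence ny: "ny > 0" unfolding ny_def by simp
    define C where "C = \<bar>lm * ny - q\<bar> + 1"
    have C: "C > 0" unfolding C_def by simp
    define t where "t = ny / C"
    have t: "t > 0" unfolding t_def using ny C by simp
    have "t * (2 * ny) \<le> t * (t * (lm * ny - q))"
      using ineq[OF t] by (simp add: algebra_simps power2_eq_square)
    hence "2 * ny \<le> t * (lm * ny - q)" using t by simp
    also have "\<dots> \<le> t * \<bar>lm * ny - q\<bar>" using t by (intro mult_left_mono) auto
    also have "\<dots> < t * C" using t unfolding C_def by (intro mult_strict_left_mono) auto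
    also have "\<dots> = ny" unfolding t_def using C by simp
    finally show False using ny by simp
  qed
  hence "y = 0" unfolding ny_def by simp
  thus ?thesis unfolding y_def lam_def lm_def by simp
qed

lemma herm_eig_step:
  fixes A :: "complex^'n^'n" and e :: "'n \<Rightarrow> complex^'n" and l :: "'n \<Rightarrow> complex"
  assumes h: "hermitian_mat A" and j: "j \<notin> S"
    and eig: "\<forall>i\<in>S. A *v e i = l i *s e i"
  shows "\<exists>x \<mu>. norm x = 1 \<and> (\<forall>i\<in>S. ip (e i) x = 0) \<and> A *v x = \<mu> *s x"
proof -
  define W where "W = {x. \<forall>i\<in>S. ip (e i) x = 0}"
  have W_add: "\<And>x y. x\<in>W \<Longrightarrow> y\<in>W \<Longrightarrow> x + y \<in> W" unfolding W_def by (simp add: ip_add_right)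
  have W_diff: "\<And>x y. x\<in>W \<Longrightarrow> y\<in>W \<Longrightarrow> x - y \<in> W" unfolding W_def by (simp add: ip_diff_right)
  have W_smult: "\<And>c x. x\<in>W \<Longrightarrow> c *s x \<in> W" unfolding W_def by (simp add: ip_smult_right)
  have W_A: "A *v x \<in> W" if "x \<in> W" for x
  proof -
    have "ip (e i) (A *v x) = 0" if i: "i \<in> S" for i
    proof -
      have "ip (e i) (A *v x) = ip (A *v e i) x" by (rule ip_herm[OF h])
      also have "\<dots> = cnj (l i) * ip (e i) x" using eig i by (simp add: ip_smult_left)
      also have "\<dots> = 0" using \<open>x \<in> W\<close> i unfolding W_def by simp
      finally show ?thesis .
    qed
    thus ?thesis unfolding W_def by auto
  qed
  define Mx :: "complex^'n^'n" where "Mx = (\<chi> i k. if i \<in> S then cnj (e i $ k) else 0)"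
  have "Finite_Cartesian_Product.row j Mx = 0" unfolding Mx_def Finite_Cartesian_Product.row_def using j by (simp add: Finite_Cartesian_Product.vec_eq_iff)
  hence "Determinants.det Mx = 0" by (rule det_zero_row)
  hence "\<not> inj ((*v) Mx)"
    using det_nz_iff_inj_gen[OF matrix_vector_mul_linear_gen[of Mx]]
    unfolding matrix_of_matrix_vector_mul by simp
  then obtain a b where ab: "a \<noteq> b" "Mx *v a = Mx *v b" unfolding inj_def by auto
  define x0 where "x0 = a - b"
  have x0: "x0 \<noteq> 0" "Mx *v x0 = 0" unfolding x0_def using ab by (auto simp: matrix_vector_mult_diff_distrib)
  have x0W: "x0 \<in> W" unfolding W_def
  proof (rule CollectI, rule ballI)
    fix i assume i: "i \<in> S"
    have "(Mx *v x0) $ i = ip (e i) x0"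
      unfolding Mx_def ip_def matrix_vector_mult_def using i by simp
    thus "ip (e i) x0 = 0" using x0 by simp
  qed
  define x1 where "x1 = complex_of_real (1 / norm x0) *s x0"
  have x1W: "x1 \<in> W" unfolding x1_def using x0W W_smult by auto
  have "ip x1 x1 = 1"
    unfolding x1_def ip_smult_left ip_smult_right using x0 by (simp add: ip_self power2_eq_square)
  hence nx1: "norm x1 = 1" using norm_eq_ip by auto
  define K where "K = sphere 0 1 \<inter> W"
  have "W = (\<Inter>i\<in>S. {x. ip (e i) x = 0})" unfolding W_def by auto
  also have "closed \<dots>"
    by (intro closed_INT ballI closed_Collect_eq continuous_ip_right continuous_on_const)
  finally have "closed W" .
  hence cK: "compact K" unfolding K_def by (intro compact_Int_closed compact_sphere)
  have neK: "K \<noteq> {}" using x1W nx1 unfolding K_def by auto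
  obtain z where zK: "z \<in> K" and zmax: "\<forall>y\<in>K. Re (ip y (A *v y)) \<le> Re (ip z (A *v z))"
    using continuous_attains_sup[OF cK neK continuous_rayleigh] by blast
  have z: "z \<in> W" "norm z = 1" using zK unfolding K_def by auto
  have "A *v z = complex_of_real (Re (ip z (A *v z))) *s z"
    by (rule rayleigh_max[OF h W_add W_smult W_diff W_A z]) (use zmax in \<open>auto simp: K_def\<close>)
  thus ?thesis using z unfolding W_def by blast
qed

lemma herm_onb:
  fixes A :: "complex^'n^'n"
  assumes h: "hermitian_mat A" and fin: "finite S"
  shows "\<exists>(e :: 'n \<Rightarrow> complex^'n) (l :: 'n \<Rightarrow> complex).
    (\<forall>i\<in>S. \<forall>j\<in>S. ip (e i) (e j) = (if i = j then 1 else 0)) \<and> (\<forall>i\<in>S. A *v e i = l i *s e i)"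
  using fin
proof (induction S rule: finite_induct)
  case empty thus ?case by auto
next
  case (insert j S)
  then obtain e l where on: "\<forall>i\<in>S. \<forall>j\<in>S. ip (e i) (e j) = (if i = j then 1 else 0)"
    and eig: "\<forall>i\<in>S. A *v e i = l i *s e i" by blast
  obtain x \<mu> where x: "norm x = 1" "\<forall>i\<in>S. ip (e i) x = 0" "A *v x = \<mu> *s x"
    using herm_eig_step[OF h insert(2) eig] by blast
  have xx: "ip x x = 1" using x(1) norm_eq_ip by auto
  have xe: "ip x (e i) = 0" if "i \<in> S" for i using x(2) that ip_cnj[of "e i" x] by simp
  show ?case
    apply (rule exI[of _ "e(j := x)"], rule exI[of _ "l(j := \<mu>)"])
    using on eig x xx xe insert(2) by auto
qed

lemma spectral_pd:
  fixes A :: "complex^'n^'n"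
  assumes pd: "pos_def_mat A"
  shows "\<exists>U (d :: 'n \<Rightarrow> real). unitary_mat U \<and> (\<forall>i. d i > 0) \<and>
    A = U ** Defs.diag_mat (\<lambda>i. complex_of_real (d i)) ** adjoint_mat U"
proof -
  have h: "hermitian_mat A" using pd unfolding pos_def_mat_def by auto
  obtain e :: "'n \<Rightarrow> complex^'n" and l where
    on: "\<And>i j. ip (e i) (e j) = (if i = j then 1 else 0)" and eig: "\<And>i. A *v e i = l i *s e i"
    using herm_onb[OF h, of UNIV] by auto
  define U :: "complex^'n^'n" where "U = (\<chi> r c. e c $ r)"
  have U: "adjoint_mat U ** U = Finite_Cartesian_Product.mat 1"
    unfolding U_def adjoint_mat_def matrix_matrix_mult_def Finite_Cartesian_Product.mat_def
    using on unfolding ip_def by (simp add: Finite_Cartesian_Product.vec_eq_iff)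
  have U': "U ** adjoint_mat U = Finite_Cartesian_Product.mat 1"
    using U matrix_left_right_inverse by blast
  define d where "d i = Re (l i)" for i
  have lreal: "l i = complex_of_real (d i)" and dpos: "d i > 0" for i
  proof -
    have ee: "ip (e i) (e i) = 1" using on by simp
    hence "e i \<noteq> 0" by auto
    hence pos: "Re (qform (e i) A) > 0" using pd unfolding pos_def_mat_def by auto
    have q: "qform (e i) A = l i" unfolding qform_ip eig ip_smult_right ee by simp
    have "qform (e i) A = complex_of_real (Re (qform (e i) A))"
      unfolding qform_ip by (rule ip_herm_real[OF h])
    thus "l i = complex_of_real (d i)" unfolding d_def q by simp
    show "d i > 0" using pos q unfolding d_def by simp
  qed
  have AU: "A ** U = U ** Defs.diag_mat (\<lambda>i. complex_of_real (d i))"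
  proof -
    have "(A ** U) $ r $ c = (A *v e c) $ r" for r c
      unfolding U_def matrix_matrix_mult_def matrix_vector_mult_def by simp
    moreover have "(U ** Defs.diag_mat (\<lambda>i. complex_of_real (d i))) $ r $ c = complex_of_real (d c) * e c $ r" for r c
      unfolding U_def matrix_matrix_mult_def Defs.diag_mat_def
      by (simp add: if_distrib[of "\<lambda>x. _ * x"] sum.delta' cong: if_cong)
    ultimately show ?thesis unfolding eig lreal by (simp add: Finite_Cartesian_Product.vec_eq_iff)
  qed
  have "A = A ** (U ** adjoint_mat U)" unfolding U' by simp
  also have "\<dots> = U ** Defs.diag_mat (\<lambda>i. complex_of_real (d i)) ** adjoint_mat U"
    by (simp add: matrix_mul_assoc AU)
  finally show ?thesis using U dpos unfolding unitary_mat_def by blast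
qed

abbreviation Imat :: "complex^'n^'n" where "Imat \<equiv> Finite_Cartesian_Product.mat 1"

lemma diag_left: "(Defs.diag_mat f ** M) $ i $ j = f i * M $ i $ j"
  unfolding Defs.diag_mat_def matrix_matrix_mult_def
  by (simp add: if_distrib[of "\<lambda>x. x * _"] sum.delta cong: if_cong)

lemma diag_right: "(M ** Defs.diag_mat f) $ i $ j = M $ i $ j * f j"
  unfolding Defs.diag_mat_def matrix_matrix_mult_def
  by (simp add: if_distrib[of "\<lambda>x. _ * x"] sum.delta' cong: if_cong)

lemma diag_mult: "Defs.diag_mat f ** Defs.diag_mat g = Defs.diag_mat (\<lambda>i. f i * g i)"
  unfolding Finite_Cartesian_Product.vec_eq_iff diag_left by (simp add: Defs.diag_mat_def)

lemma diag_one: "Defs.diag_mat (\<lambda>i. 1) = Imat"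
  unfolding Defs.diag_mat_def Finite_Cartesian_Product.mat_def by simp

lemma adjoint_mult: "adjoint_mat (X ** Y) = adjoint_mat Y ** adjoint_mat X"
  unfolding adjoint_mat_def matrix_matrix_mult_def
  by (simp add: Finite_Cartesian_Product.vec_eq_iff cnj_sum mult.commute)

lemma adjoint_adjoint: "adjoint_mat (adjoint_mat X) = X"
  unfolding adjoint_mat_def by (simp add: Finite_Cartesian_Product.vec_eq_iff)

lemma adjoint_diag_real: "adjoint_mat (Defs.diag_mat (\<lambda>i. complex_of_real (f i))) = Defs.diag_mat (\<lambda>i. complex_of_real (f i))"
  unfolding adjoint_mat_def Defs.diag_mat_def by (simp add: Finite_Cartesian_Product.vec_eq_iff)

definition fc :: "complex^'n^'n \<Rightarrow> ('n \<Rightarrow> real) \<Rightarrow> real \<Rightarrow> complex^'n^'n" where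
  "fc U d s = U ** Defs.diag_mat (\<lambda>i. complex_of_real (d i powr s)) ** adjoint_mat U"

lemma unitary_right: "unitary_mat U \<Longrightarrow> U ** adjoint_mat U = Imat"
  unfolding unitary_mat_def using matrix_left_right_inverse by blast

lemma fc_mult:
  assumes U: "unitary_mat U" and d: "\<forall>i. d i > 0"
  shows "fc U d s ** fc U d t = fc U d (s + t)"
proof -
  have "fc U d s ** fc U d t = U ** (Defs.diag_mat (\<lambda>i. complex_of_real (d i powr s)) ** (adjoint_mat U ** U)
      ** Defs.diag_mat (\<lambda>i. complex_of_real (d i powr t))) ** adjoint_mat U"
    unfolding fc_def by (simp add: matrix_mul_assoc)
  also have "\<dots> = fc U d (s + t)"
    using U d unfolding unitary_mat_def fc_def
    by (simp add: diag_mult powr_add)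
  finally show ?thesis .
qed

lemma fc_zero:
  assumes U: "unitary_mat U" and d: "\<forall>i. d i > 0"
  shows "fc U d 0 = Imat"
  using d unitary_right[OF U] unfolding fc_def
  by (simp add: less_imp_neq[symmetric] diag_one)

lemma fc_adj: "adjoint_mat (fc U d s) = fc U d s"
  unfolding fc_def by (simp add: adjoint_mult adjoint_adjoint adjoint_diag_real matrix_mul_assoc)

lemma fc_herm: "ip x (fc U d s *v y) = ip (fc U d s *v x) y"
  using ip_adj[of x "fc U d s" y] unfolding fc_adj .

lemma fc_ip:
  assumes U: "unitary_mat U" and d: "\<forall>i. d i > 0"
  shows "ip (fc U d s *v x) (fc U d t *v y) = ip x (fc U d (s + t) *v y)"
proof -
  have "ip (fc U d s *v x) (fc U d t *v y) = ip x (fc U d s *v (fc U d t *v y))" by (simp add: fc_herm)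
  also have "\<dots> = ip x (fc U d (s + t) *v y)" by (simp add: matrix_vector_mul_assoc fc_mult[OF U d])
  finally show ?thesis .
qed

lemma fc_vv:
  assumes U: "unitary_mat U" and d: "\<forall>i. d i > 0"
  shows "fc U d s *v (fc U d t *v y) = fc U d (s + t) *v y"
  by (simp add: matrix_vector_mul_assoc fc_mult[OF U d])

lemma fc_pos:
  assumes U: "unitary_mat U" and d: "\<forall>i. d i > 0" and x: "x \<noteq> 0"
  shows "ip x (fc U d s *v x) = complex_of_real (Re (ip x (fc U d s *v x)))"
    "Re (ip x (fc U d s *v x)) > 0"
proof -
  define z where "z = adjoint_mat U *v x"
  have xz: "x = U *v z" unfolding z_def using unitary_right[OF U] by (simp add: matrix_vector_mul_assoc)
  hence z0: "z \<noteq> 0" using x by auto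
  have "ip x (fc U d s *v x) = ip z (Defs.diag_mat (\<lambda>i. complex_of_real (d i powr s)) *v z)"
    unfolding fc_def z_def by (simp add: matrix_vector_mul_assoc[symmetric] ip_adj)
  also have "\<dots> = (\<Sum>i\<in>UNIV. complex_of_real (d i powr s) * (z $ i * cnj (z $ i)))"
    unfolding ip_def matrix_vector_mult_def Defs.diag_mat_def
    by (simp add: if_distrib[of "\<lambda>x. x * _"] sum.delta cong: if_cong)
       (simp add: ac_simps)
  also have "\<dots> = (\<Sum>i\<in>UNIV. complex_of_real (d i powr s * (cmod (z $ i))^2))"
    by (simp only: complex_norm_square[symmetric] of_real_mult)
  also have "\<dots> = complex_of_real (\<Sum>i\<in>UNIV. d i powr s * (cmod (z $ i))^2)" by simp
  finally have e: "ip x (fc U d s *v x) = complex_of_real (\<Sum>i\<in>UNIV. d i powr s * (cmod (z $ i))^2)" .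
  thus "ip x (fc U d s *v x) = complex_of_real (Re (ip x (fc U d s *v x)))" by simp
  obtain k where k: "z $ k \<noteq> 0" using z0 by (auto simp: Finite_Cartesian_Product.vec_eq_iff)
  have "0 < d k powr s * (cmod (z $ k))^2" using d[rule_format, of k] k by (intro mult_pos_pos) auto
  also have "\<dots> \<le> (\<Sum>i\<in>UNIV. d i powr s * (cmod (z $ i))^2)"
    by (rule member_le_sum) auto
  finally show "Re (ip x (fc U d s *v x)) > 0" unfolding e by simp
qed

lemma fc_unique:
  assumes U: "unitary_mat U" and d: "\<forall>i. d i > 0"
    and U': "unitary_mat U'" and d': "\<forall>i. d' i > 0"
    and eq: "U ** Defs.diag_mat (\<lambda>i. complex_of_real (d i)) ** adjoint_mat U =
             U' ** Defs.diag_mat (\<lambda>i. complex_of_real (d' i)) ** adjoint_mat U'"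
  shows "fc U d s = fc U' d' s"
proof -
  let ?D = "Defs.diag_mat (\<lambda>i. complex_of_real (d i))"
  let ?D' = "Defs.diag_mat (\<lambda>i. complex_of_real (d' i))"
  let ?Ds = "Defs.diag_mat (\<lambda>i. complex_of_real (d i powr s))"
  let ?Ds' = "Defs.diag_mat (\<lambda>i. complex_of_real (d' i powr s))"
  define W where "W = adjoint_mat U ** U'"
  have UU: "adjoint_mat U ** U = Imat" using U unfolding unitary_mat_def .
  have UU': "adjoint_mat U' ** U' = Imat" using U' unfolding unitary_mat_def .
  have "?D ** W = adjoint_mat U ** (U ** ?D ** adjoint_mat U) ** U'"
    unfolding W_def by (simp add: matrix_mul_assoc UU)
  also have "\<dots> = adjoint_mat U ** (U' ** ?D' ** adjoint_mat U') ** U'" unfolding eq ..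
  also have "\<dots> = W ** ?D'"
    unfolding W_def by (simp add: matrix_mul_assoc[symmetric] UU')
  finally have DW: "?D ** W = W ** ?D'" .
  have DWs: "?Ds ** W = W ** ?Ds'"
  proof -
    have "(?Ds ** W) $ i $ j = (W ** ?Ds') $ i $ j" for i j
    proof -
      have "complex_of_real (d i) * W $ i $ j = W $ i $ j * complex_of_real (d' j)"
        using arg_cong[OF DW, of "\<lambda>M. M $ i $ j"] unfolding diag_left diag_right .
      hence "W $ i $ j = 0 \<or> d i = d' j" by (auto simp: mult.commute)
      thus ?thesis unfolding diag_left diag_right by (auto simp: mult.commute)
    qed
    thus ?thesis by (simp add: Finite_Cartesian_Product.vec_eq_iff)
  qed
  have "fc U d s = U ** ?Ds ** (W ** adjoint_mat U')"
    unfolding fc_def W_def using unitary_right[OF U'] by (simp add: matrix_mul_assoc[symmetric])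
  also have "\<dots> = U ** (?Ds ** W) ** adjoint_mat U'" by (simp add: matrix_mul_assoc)
  also have "\<dots> = (U ** adjoint_mat U) ** U' ** ?Ds' ** adjoint_mat U'"
    unfolding DWs unfolding W_def by (simp add: matrix_mul_assoc)
  also have "\<dots> = fc U' d' s" unfolding unitary_right[OF U] fc_def by simp
  finally show ?thesis .
qed

lemma mat_rpow_fc:
  assumes U: "unitary_mat U" and d: "\<forall>i. d i > 0"
    and A: "A = U ** Defs.diag_mat (\<lambda>i. complex_of_real (d i)) ** adjoint_mat U"
  shows "mat_rpow A s = fc U d s"
proof -
  let ?P = "\<lambda>M. \<exists>U (d :: 'a \<Rightarrow> real).
      unitary_mat U \<and> (\<forall>i. d i > 0) \<and>
      A = U ** Defs.diag_mat (\<lambda>i. complex_of_real (d i)) ** adjoint_mat U \<and>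
      M = U ** Defs.diag_mat (\<lambda>i. complex_of_real (d i powr s)) ** adjoint_mat U"
  have "?P (fc U d s)" using U d A unfolding fc_def by blast
  hence "?P (mat_rpow A s)" unfolding mat_rpow_def by (rule someI)
  then obtain U' d' where U': "unitary_mat U'" "\<forall>i. d' i > 0"
    "A = U' ** Defs.diag_mat (\<lambda>i. complex_of_real (d' i)) ** adjoint_mat U'"
    "mat_rpow A s = fc U' d' s" unfolding fc_def by blast
  have "fc U d s = fc U' d' s" by (rule fc_unique[OF U d U'(1,2)]) (use A U'(3) in simp)
  thus ?thesis using U'(4) by simp
qed

lemma fc_one:
  assumes d: "\<forall>i. d i > 0"
    and A: "A = U ** Defs.diag_mat (\<lambda>i. complex_of_real (d i)) ** adjoint_mat U"
  shows "fc U d 1 = A"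
  unfolding A fc_def using d by (simp add: less_imp_le)

lemma sum_cmod_sq: "(\<Sum>i\<in>UNIV. (cmod (x $ i))\<^sup>2) = (norm x)^2"
  unfolding norm_vec_def L2_set_def by (simp add: sum_nonneg)

lemma fov_mem: "ip x x = 1 \<Longrightarrow> qform x M \<in> field_of_values M"
  unfolding field_of_values_def sum_cmod_sq
  by (rule CollectI, rule exI[of _ x]) (use norm_eq_ip[of x] in auto)

lemma key_alg:
  fixes a c b K h al be :: complex
  assumes al: "al \<noteq> 0" and be: "be \<noteq> 0" and E: "a * al + h * c * be = h * b * K"
  shows "a = (- h * (be / al)) * c - (- h * (be / al)) * (K / be) * b"
proof -
  have "(- h * (be / al)) * c - (- h * (be / al)) * (K / be) * b = (h * b * K - h * c * be) / al"
    using al be by (simp add: field_simps)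
  also have "h * b * K - h * c * be = a * al" by (metis E add_diff_cancel_right')
  finally show ?thesis using al by simp
qed

lemma key:
  fixes A B :: "complex^'n^'n" and h p :: real and \<xi> :: complex and v :: "complex^'n"
  assumes pd: "pos_def_mat A"
    and hyp: "field_of_values (mat_rpow A (p / 2 - 1) ** B ** mat_rpow A (- p / 2))
            \<subseteq> (\<Inter>y \<in> (\<lambda>z. - complex_of_real h * z) ` field_of_values A. D_set \<theta> u m y)"
    and v: "v \<noteq> 0"
    and eq: "a_poly m \<xi> *s v + (complex_of_real h * c_poly \<theta> m \<xi>) *s (A *v v)
             = (complex_of_real h * b_poly \<theta> u \<xi>) *s (B *v v)"
  shows "cmod \<xi> < 1"
proof -
  obtain U d where U: "unitary_mat U" and d: "\<forall>i. d i > 0"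
    and A: "A = U ** Defs.diag_mat (\<lambda>i. complex_of_real (d i)) ** adjoint_mat U"
    using spectral_pd[OF pd] by blast
  define F where "F = fc U d"
  have rp: "mat_rpow A s = F s" for s unfolding F_def by (rule mat_rpow_fc[OF U d A])
  have F1: "F 1 = A" unfolding F_def by (rule fc_one[OF d A])
  have Fip: "ip (F s *v x) (F t *v y) = ip x (F (s + t) *v y)" for s t x y
    unfolding F_def by (rule fc_ip[OF U d])
  have Fvv: "F s *v (F t *v y) = F (s + t) *v y" for s t y
    unfolding F_def by (rule fc_vv[OF U d])
  have F0: "F 0 = Imat" unfolding F_def by (rule fc_zero[OF U d])
  have Fh: "ip x (F s *v y) = ip (F s *v x) y" for s x y unfolding F_def by (rule fc_herm)
  define \<alpha> where "\<alpha> = Re (ip v (F (p - 1) *v v))"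
  define \<beta> where "\<beta> = Re (ip v (F p *v v))"
  have al: "ip v (F (p - 1) *v v) = complex_of_real \<alpha>" "\<alpha> > 0"
    unfolding \<alpha>_def F_def using fc_pos[OF U d v] by auto
  have be: "ip v (F p *v v) = complex_of_real \<beta>" "\<beta> > 0"
    unfolding \<beta>_def F_def using fc_pos[OF U d v] by auto
  define K where "K = F (p - 1) *v v"
  define ipKB where "ipKB = ip K (B *v v)"
  have Kv: "ip K v = complex_of_real \<alpha>" unfolding K_def using ip_cnj[of v "F (p - 1) *v v"] al by simp
  have KAv: "ip K (A *v v) = complex_of_real \<beta>"
  proof -
    have "ip K (A *v v) = ip (F (p - 1) *v v) (F 1 *v v)" unfolding K_def F1 ..
    also have "\<dots> = ip v (F (p - 1 + 1) *v v)" by (rule Fip)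
    finally show ?thesis using be by simp
  qed
  have E: "a_poly m \<xi> * complex_of_real \<alpha> + complex_of_real h * c_poly \<theta> m \<xi> * complex_of_real \<beta>
      = complex_of_real h * b_poly \<theta> u \<xi> * ipKB"
    using arg_cong[OF eq, of "ip K"] unfolding ipKB_def
    by (simp add: ip_add_right ip_smult_right Kv KAv)
  define w where "w = F (p / 2) *v v"
  define wn where "wn = complex_of_real (1 / sqrt \<beta>) *s w"
  have ww: "ip w w = complex_of_real \<beta>"
  proof -
    have "ip w w = ip v (F (p / 2 + p / 2) *v v)" unfolding w_def by (rule Fip)
    thus ?thesis using be by simp
  qed
  have wnwn: "ip wn wn = 1"
    unfolding wn_def ip_smult_left ip_smult_right ww using be
    by (simp add: field_simps flip: of_real_mult)
  define P where "P = F (p / 2 - 1)"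
  define Q where "Q = F (- p / 2)"
  have Qw: "Q *v w = v" unfolding Q_def w_def Fvv by (simp add: F0)
  have Pw: "P *v w = K" unfolding P_def w_def K_def Fvv by simp
  have "ip w ((P ** B ** Q) *v w) = ipKB"
  proof -
    have "ip w ((P ** B ** Q) *v w) = ip w (P *v (B *v (Q *v w)))"
      by (simp add: matrix_vector_mul_assoc matrix_mul_assoc)
    also have "\<dots> = ip (P *v w) (B *v v)" unfolding Qw P_def by (rule Fh)
    finally show ?thesis unfolding Pw ipKB_def .
  qed
  hence mu: "qform wn (P ** B ** Q) = ipKB / complex_of_real \<beta>"
    unfolding qform_ip wn_def vector_scalar_commute ip_smult_left ip_smult_right using be
    by (simp add: field_simps flip: of_real_mult)
  have muF: "qform wn (P ** B ** Q) \<in> field_of_values (mat_rpow A (p / 2 - 1) ** B ** mat_rpow A (- p / 2))"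
    unfolding rp P_def[symmetric] Q_def[symmetric] by (rule fov_mem[OF wnwn])
  define x where "x = complex_of_real (1 / sqrt \<alpha>) *s (F ((p - 1) / 2) *v v)"
  have xx0: "ip (F ((p - 1) / 2) *v v) (F ((p - 1) / 2) *v v) = complex_of_real \<alpha>"
  proof -
    have "ip (F ((p - 1) / 2) *v v) (F ((p - 1) / 2) *v v) = ip v (F ((p - 1) / 2 + (p - 1) / 2) *v v)"
      by (rule Fip)
    thus ?thesis using al by simp
  qed
  have xx: "ip x x = 1"
    unfolding x_def ip_smult_left ip_smult_right xx0 using al
    by (simp add: field_simps flip: of_real_mult)
  have xAx0: "ip (F ((p - 1) / 2) *v v) (A *v (F ((p - 1) / 2) *v v)) = complex_of_real \<beta>"
  proof -
    have "ip (F ((p - 1) / 2) *v v) (A *v (F ((p - 1) / 2) *v v))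
        = ip (F ((p - 1) / 2) *v v) (F (1 + (p - 1) / 2) *v v)" unfolding F1[symmetric] Fvv ..
    also have "\<dots> = ip v (F ((p - 1) / 2 + (1 + (p - 1) / 2)) *v v)" by (rule Fip)
    finally show ?thesis using be by (simp add: field_simps)
  qed
  have lam: "qform x A = complex_of_real (\<beta> / \<alpha>)"
    unfolding qform_ip x_def vector_scalar_commute ip_smult_left ip_smult_right xAx0 using al
    by (simp add: field_simps flip: of_real_mult)
  have lamF: "qform x A \<in> field_of_values A" by (rule fov_mem[OF xx])
  define y where "y = - complex_of_real h * qform x A"
  have "y \<in> (\<lambda>z. - complex_of_real h * z) ` field_of_values A" unfolding y_def using lamF by blast
  hence D: "qform wn (P ** B ** Q) \<in> D_set \<theta> u m y" using hyp muF by blast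
  have "a_poly m \<xi> = y * c_poly \<theta> m \<xi> - y * qform wn (P ** B ** Q) * b_poly \<theta> u \<xi>"
    unfolding y_def mu lam of_real_divide
    by (rule key_alg) (use al(2) be(2) E in \<open>auto simp: ac_simps\<close>)
  thus ?thesis using D unfolding D_set_def by blast
qed

definition smat :: "complex \<Rightarrow> complex^'n^'n \<Rightarrow> complex^'n^'n" where
  "smat c M = (\<chi> i j. c * M $ i $ j)"

lemma smat_mv: "smat c M *v x = c *s (M *v x)"
  unfolding smat_def matrix_vector_mult_def
  by (simp add: Finite_Cartesian_Product.vec_eq_iff sum_distrib_left mult.assoc)

lemma sum_if_eq: fixes m K :: nat shows "(\<Sum>b\<le>m. (if b = K then g b else (0::'a::comm_monoid_add))) = (if K \<le> m then g K else 0)"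
proof -
  have "(\<Sum>b\<in>{..m}. (if b = K then g b else 0)) = (if K \<in> {..m} then g K else 0)"
    by (rule sum.delta) (rule finite_atMost)
  thus ?thesis by simp
qed

lemma sum_C:
  fixes A B :: "complex^'n^'n" and c1 k1 k2 k3 :: complex and m :: nat
    and f :: "nat \<Rightarrow> complex" and z :: "nat \<Rightarrow> complex^'n"
  assumes m: "m \<ge> 1" and k3: "\<not> 2 \<le> m \<Longrightarrow> k3 = 0"
  defines "C \<equiv> \<lambda>b. (if b = 0 then Imat - smat c1 A else 0) + (if b = m then smat k1 B else 0)
      + (if b + 1 = m then smat k2 B else 0) + (if b + 2 = m then smat k3 B else 0)"
  shows "(\<Sum>b\<le>m. f b *s (C b *v z b)) = f 0 *s (z 0 - c1 *s (A *v z 0)) + f m *s (k1 *s (B *v z m))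
     + f (m - 1) *s (k2 *s (B *v z (m - 1))) + f (m - 2) *s (k3 *s (B *v z (m - 2)))"
proof -
  define T0 where "T0 b = f b *s (z b - c1 *s (A *v z b))" for b
  define T1 where "T1 b = f b *s (k1 *s (B *v z b))" for b
  define T2 where "T2 b = f b *s (k2 *s (B *v z b))" for b
  define T3 where "T3 b = f b *s (k3 *s (B *v z b))" for b
  have e1: "(b + 1 = m) = (b = m - 1)" for b using m by auto
  have e2: "(b + 2 = m) = (b = m - 2 \<and> 2 \<le> m)" for b by auto
  have split: "f b *s (C b *v z b) = (if b = 0 then T0 b else 0) + (if b = m then T1 b else 0)
      + (if b = m - 1 then T2 b else 0) + (if b = m - 2 \<and> 2 \<le> m then T3 b else 0)" for b
    unfolding C_def T0_def T1_def T2_def T3_def e1 e2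
    by (simp add: matrix_vector_mult_add_rdistrib matrix_vector_mult_diff_rdistrib smat_mv
        vector_add_ldistrib)
  have last: "(\<Sum>b\<le>m. if b = m - 2 \<and> 2 \<le> m then T3 b else 0) = T3 (m - 2)"
  proof (cases "2 \<le> m")
    case True thus ?thesis using sum_if_eq[where m=m and K="m - 2" and g=T3] by simp
  next
    case False thus ?thesis using k3 unfolding T3_def by simp
  qed
  have "(\<Sum>b\<le>m. f b *s (C b *v z b)) = (\<Sum>b\<le>m. if b = 0 then T0 b else 0) + (\<Sum>b\<le>m. if b = m then T1 b else 0)
      + (\<Sum>b\<le>m. if b = m - 1 then T2 b else 0) + (\<Sum>b\<le>m. if b = m - 2 \<and> 2 \<le> m then T3 b else 0)"
    unfolding split by (simp add: sum.distrib)
  also have "\<dots> = T0 0 + T1 m + T2 (m - 1) + T3 (m - 2)"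
    unfolding last sum_if_eq by simp
  finally show ?thesis unfolding T0_def T1_def T2_def T3_def .
qed

theorem mainTheorem4:
  fixes A B :: "complex^'n^'n" and \<tau> \<theta> u h :: real and m :: nat
  assumes "\<tau> > 0"
    and "pos_def_mat A"
    and "0 \<le> \<theta>" "\<theta> \<le> 1"
    and "0 \<le> u" "u < 1"
    and "m \<ge> 1" "u > 0 \<longrightarrow> m \<ge> 2"
    and "h = \<tau> / (real m - u)"
    and "\<exists>p::real. field_of_values (mat_rpow A (p / 2 - 1) ** B ** mat_rpow A (- p / 2))
            \<subseteq> (\<Inter>y \<in> (\<lambda>z. - complex_of_real h * z) ` field_of_values A. D_set \<theta> u m y)"
  shows "theta_stable A B \<theta> u m h"
proof -
  note tau = assms(1) and pd = assms(2) and th = assms(3,4) and uu = assms(5,6) and m = assms(7)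
    and um = assms(8) and hdef = assms(9)
  obtain p where hyp: "field_of_values (mat_rpow A (p / 2 - 1) ** B ** mat_rpow A (- p / 2))
            \<subseteq> (\<Inter>y \<in> (\<lambda>z. - complex_of_real h * z) ` field_of_values A. D_set \<theta> u m y)"
    using assms(10) by blast
  have "real m - u > 0" using m uu by linarith
  hence hpos: "h > 0" unfolding hdef using tau by simp
  define c1 :: complex where "c1 = complex_of_real (h * (1 - \<theta>))"
  define c2 :: complex where "c2 = complex_of_real (h * \<theta>)"
  define k1 where "k1 = c1 * complex_of_real (1 - u)"
  define k2 where "k2 = c1 * complex_of_real u + c2 * complex_of_real (1 - u)"
  define k3 where "k3 = c2 * complex_of_real u"
  have k3z: "k3 = 0" if "\<not> 2 \<le> m"
  proof -
    have "u = 0" using um uu that by auto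
    thus ?thesis unfolding k3_def by simp
  qed
  define G where "G = Imat + smat c2 A"
  have Gv: "G *v x = x + c2 *s (A *v x)" for x
    unfolding G_def by (simp add: matrix_vector_mult_add_rdistrib smat_mv)
  have h_herm: "hermitian_mat A" using pd unfolding pos_def_mat_def by auto
  have G0: "x = 0" if "G *v x = 0" for x
  proof (rule ccontr)
    assume x: "x \<noteq> 0"
    have "ip x (G *v x) = ip x x + c2 * ip x (A *v x)" unfolding Gv ip_add_right ip_smult_right ..
    hence "Re (ip x (G *v x)) = (norm x)^2 + (h * \<theta>) * Re (qform x A)"
      unfolding c2_def qform_ip by (simp add: ip_self)
    moreover have "(norm x)^2 > 0" using x by simp
    moreover have "Re (qform x A) > 0" using pd x unfolding pos_def_mat_def by auto
    moreover have "h * \<theta> \<ge> 0" using hpos th by simp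
    ultimately have "Re (ip x (G *v x)) > 0" by (simp add: add_pos_nonneg)
    thus False using that by simp
  qed
  have "inj ((*v) G)"
  proof (rule injI)
    fix x y assume "G *v x = G *v y"
    hence "G *v (x - y) = 0" by (simp add: matrix_vector_mult_diff_distrib)
    from G0[OF this] show "x = y" by simp
  qed
  hence "Determinants.det G \<noteq> 0"
    using det_nz_iff_inj_gen[OF matrix_vector_mul_linear_gen[of G]]
    unfolding matrix_of_matrix_vector_mul by simp
  hence "invertible G" by (simp add: invertible_det_nz)
  then obtain Gi where Gi: "G ** Gi = Imat" "Gi ** G = Imat" unfolding invertible_def by blast
  define C where "C \<equiv> \<lambda>b. (if b = 0 then Imat - smat c1 A else 0) + (if b = m then smat k1 B else 0)
      + (if b + 1 = m then smat k2 B else 0) + (if b + 2 = m then smat k3 B else 0)"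
  have sC: "(\<Sum>b\<le>m. f b *s (C b *v z b)) = f 0 *s (z 0 - c1 *s (A *v z 0)) + f m *s (k1 *s (B *v z m))
     + f (m - 1) *s (k2 *s (B *v z (m - 1))) + f (m - 2) *s (k3 *s (B *v z (m - 2)))" for f z
    unfolding C_def by (rule sum_C[OF m k3z])
  define M where "M b = Gi ** C b" for b
  have Msum: "(\<Sum>b\<le>m. f b *s (M b *v z b)) = Gi *v (\<Sum>b\<le>m. f b *s (C b *v z b))" for f z
    unfolding M_def by (simp add: vec.sum matrix_vector_mul_assoc[symmetric] vector_scalar_commute)
  have GGi: "G *v (Gi *v x) = x" for x using Gi(1) by (simp add: matrix_vector_mul_assoc)
  have GiG: "Gi *v (G *v x) = x" for x using Gi(2) by (simp add: matrix_vector_mul_assoc)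
  have eig: "cmod \<xi> < 1" if v: "v \<noteq> 0" and ev: "\<xi>^(m+1) *s v = (\<Sum>b\<le>m. \<xi>^(m-b) *s (M b *v v))" for \<xi> v
  proof -
    have "G *v (\<xi>^(m+1) *s v) = (\<Sum>b\<le>m. \<xi>^(m-b) *s (C b *v v))"
      unfolding ev Msum[of "\<lambda>b. \<xi>^(m-b)" "\<lambda>_. v"] GGi ..
    also have "\<dots> = \<xi>^m *s (v - c1 *s (A *v v)) + k1 *s (B *v v) + \<xi> *s (k2 *s (B *v v))
        + \<xi>^2 *s (k3 *s (B *v v))"
    proof -
      have "\<xi>^(m - (m - 2)) *s (k3 *s (B *v v)) = \<xi>^2 *s (k3 *s (B *v v))"
        by (cases "2 \<le> m") (simp_all add: k3z)
      moreover have "m - (m - 1) = 1" using m by simp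
      ultimately show ?thesis unfolding sC[of "\<lambda>b. \<xi>^(m-b)" "\<lambda>_. v"] by simp
    qed
    finally have E: "G *v (\<xi>^(m+1) *s v) = \<xi>^m *s (v - c1 *s (A *v v)) + k1 *s (B *v v)
        + \<xi> *s (k2 *s (B *v v)) + \<xi>^2 *s (k3 *s (B *v v))" .
    have "a_poly m \<xi> *s v + (complex_of_real h * c_poly \<theta> m \<xi>) *s (A *v v)
             = (complex_of_real h * b_poly \<theta> u \<xi>) *s (B *v v)"
    proof (rule Finite_Cartesian_Product.vec_eq_iff[THEN iffD2], rule allI)
      fix i
      have Ei: "\<xi>^(m+1) * v $ i + c2 * (\<xi>^(m+1) * (A *v v) $ i) = \<xi>^m * (v $ i - c1 * (A *v v) $ i)
          + k1 * (B *v v) $ i + \<xi> * (k2 * (B *v v) $ i) + \<xi>^2 * (k3 * (B *v v) $ i)"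
        using arg_cong[OF E, of "\<lambda>x. x $ i"] unfolding Gv vector_scalar_commute by (simp add: algebra_simps)
      show "(a_poly m \<xi> *s v + (complex_of_real h * c_poly \<theta> m \<xi>) *s (A *v v)) $ i
          = ((complex_of_real h * b_poly \<theta> u \<xi>) *s (B *v v)) $ i"
        using Ei unfolding a_poly_def b_poly_def c_poly_def c1_def c2_def k1_def k2_def k3_def
        by (simp add: algebra_simps power2_eq_square)
    qed
    thus ?thesis by (rule key[OF pd hyp v])
  qed
  show ?thesis unfolding theta_stable_def
  proof (intro allI impI)
    fix y :: "int \<Rightarrow> complex^'n"
    assume st: "\<forall>n\<ge>0. theta_step A B \<theta> u m h y n"
    have rec: "y (n+1) = (\<Sum>b\<le>m. M b *v y (n - int b))" if n: "n \<ge> 0" for n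
    proof -
      have ts: "y (n + 1) = y n
       + c1 *s (- (A *v y n) + B *v (complex_of_real (1 - u) *s y (n - int m)
                                 + complex_of_real u *s y (n - int m + 1)))
       + c2 *s (- (A *v y (n + 1)) + B *v (complex_of_real (1 - u) *s y (n - int m + 1)
                                       + complex_of_real u *s y (n - int m + 2)))"
        using st n unfolding theta_step_def c1_def c2_def by blast
      have i1: "n - int (m - 1) = n - int m + 1" using m by simp
      have i3: "k3 *s (B *v y (n - int (m - 2))) = c2 *s (B *v (complex_of_real u *s y (n - int m + 2)))"
      proof (cases "2 \<le> m")
        case True
        hence e: "n - int (m - 2) = n - int m + 2" by simp
        show ?thesis unfolding e k3_def by (simp add: vector_scalar_commute vector_smult_assoc)
      next
        case False
        hence "u = 0" using um uu by auto
        thus ?thesis using k3z False by simp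
      qed
      have S: "(\<Sum>b\<le>m. C b *v y (n - int b)) = (y n - c1 *s (A *v y n)) + k1 *s (B *v y (n - int m))
          + k2 *s (B *v y (n - int m + 1)) + c2 *s (B *v (complex_of_real u *s y (n - int m + 2)))"
        using sC[of "\<lambda>_. 1" "\<lambda>b. y (n - int b)"] unfolding i1 i3 by simp
      have "G *v y (n+1) = y (n + 1) + c2 *s (A *v y (n + 1))" by (rule Gv)
      also have "\<dots> = y n
       + c1 *s (- (A *v y n) + B *v (complex_of_real (1 - u) *s y (n - int m)
                                 + complex_of_real u *s y (n - int m + 1)))
       + c2 *s (- (A *v y (n + 1)) + B *v (complex_of_real (1 - u) *s y (n - int m + 1)
                                       + complex_of_real u *s y (n - int m + 2)))
       + c2 *s (A *v y (n + 1))"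
        using arg_cong[OF ts, of "\<lambda>z. z + c2 *s (A *v y (n + 1))"] .
      also have "\<dots> = (\<Sum>b\<le>m. C b *v y (n - int b))"
        unfolding S k1_def k2_def
        by (simp add: Finite_Cartesian_Product.vec_eq_iff matrix_vector_right_distrib
            vector_scalar_commute algebra_simps)
      finally have "G *v y (n+1) = (\<Sum>b\<le>m. C b *v y (n - int b))" .
      hence "y (n+1) = Gi *v (\<Sum>b\<le>m. C b *v y (n - int b))" using GiG by metis
      also have "\<dots> = (\<Sum>b\<le>m. M b *v y (n - int b))"
        using Msum[of "\<lambda>_. 1" "\<lambda>b. y (n - int b)"] by simp
      finally show ?thesis .
    qed
    show "(\<lambda>k. y (int k)) \<longlonglongrightarrow> 0"
      by (rule recur_decay[of m M y]) (use eig rec in auto)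
  qed
qed

end
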